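(* Let $\mathscr G=(\mathscr V,\mathscr E)$ be a finite connected graph with $N$ vertices, let $M\ge 0$ be an integer, and let $(Y_t)_{t\in\mathbb N}$ be the immediate exchange model on $\mathscr G$ with $M$ coins, started from an arbitrary configuration. Then for every vertex $x\in\mathscr V$ and every $c\in\{0,1,\dots,M\}$, $$\lim_{t\to\infty}P(Y_t(x)=c)=(c+1)\binom{M-c+2N-3}{2N-3}\Big/\binom{M+2N-1}{2N-1}.$$ In particular, when $N$ and $T=M/N$ are large, $\lim_{t\to\infty}P(Y_t(x)=c)\approx \frac{4c}{T^2} e^{-2c/T}$.
   Context: A configuration is a map $\xi:\mathscr V\to\mathbb N$; $\mathscr C_{N,M}$ denotes the set of configurations with $\sum_x\xi(x)=M$. The immediate exchange model is the discrete-time Markov chain on $\mathscr C_{N,M}$ evolving as follows: at each time step $t$, an edge $(x,y)\in\mathscr E$ is chosen uniformly at random, independent random variables $U_1$ uniform on $\{0,1,\dots,Y_t(x)\}$ and $U_2$ uniform on $\{0,1,\dots,Y_t(y)\}$ are drawn, and one sets $Y_{t+1}(x)=Y_t(x)-U_1+U_2$, $Y_{t+1}(y)=Y_t(y)-U_2+U_1$, and $Y_{t+1}(z)=Y_t(z)$ for $z\notin\{x,y\}$. *)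

theory Defs
  imports "HOL-Probability.Probability"
begin

text \<open>A finite simple graph: vertex set V, edge relation E (symmetric, irreflexive,
  contained in V x V); an undirected edge {x,y} is represented by both (x,y) and (y,x),
  so that the uniform distribution on E is the uniform distribution on undirected edges
  (the dynamics is symmetric in x and y).\<close>

definition simple_graph :: "'a set \<Rightarrow> ('a \<times> 'a) set \<Rightarrow> bool" where
  "simple_graph V E \<longleftrightarrow> finite V \<and> E \<subseteq> V \<times> V \<and> sym E \<and> (\<forall>x. (x, x) \<notin> E)"

definition connected_graph :: "'a set \<Rightarrow> ('a \<times> 'a) set \<Rightarrow> bool" where
  "connected_graph V E \<longleftrightarrow> (\<forall>x\<in>V. \<forall>y\<in>V. (x, y) \<in> E\<^sup>*)"

definition configs :: "'a set \<Rightarrow> nat \<Rightarrow> ('a \<Rightarrow> nat) set" where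
  "configs V M = {\<xi>. (\<forall>z. z \<notin> V \<longrightarrow> \<xi> z = 0) \<and> (\<Sum>x\<in>V. \<xi> x) = M}"

definition ie_step :: "('a \<times> 'a) set \<Rightarrow> ('a \<Rightarrow> nat) \<Rightarrow> ('a \<Rightarrow> nat) pmf" where
  "ie_step E \<eta> =
     pmf_of_set E \<bind> (\<lambda>(x, y).
       pmf_of_set {0..\<eta> x} \<bind> (\<lambda>u1.
       pmf_of_set {0..\<eta> y} \<bind> (\<lambda>u2.
         return_pmf (\<eta>(x := \<eta> x - u1 + u2, y := \<eta> y - u2 + u1)))))"

definition ie_dist :: "('a \<times> 'a) set \<Rightarrow> ('a \<Rightarrow> nat) \<Rightarrow> nat \<Rightarrow> ('a \<Rightarrow> nat) pmf" where
  "ie_dist E \<xi> t = ((\<lambda>p. p \<bind> ie_step E) ^^ t) (return_pmf \<xi>)"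

end

theory Submission
  imports Defs
begin


lemma hockey: "(\<Sum>k\<le>M. ((M - k + m) choose m)) = (M + m + 1) choose (m + 1)"
proof (induction M)
  case 0 then show ?case by simp
next
  case (Suc M)
  have "(\<Sum>k\<le>Suc M. ((Suc M - k + m) choose m)) = ((Suc M + m) choose m) + (\<Sum>k\<le>M. ((M - k + m) choose m))"
    by (subst sum.atMost_Suc_shift) simp
  also have "\<dots> = (Suc M + m + 1) choose (m + 1)" using Suc by simp
  finally show ?case .
qed

lemma hockey2: "(\<Sum>k\<le>M. (k + 1) * ((M - k + m) choose m)) = (M + m + 2) choose (m + 2)"
proof (induction M)
  case 0 then show ?case by simp
next
  case (Suc M)
  have A: "(\<Sum>k\<le>M. (k + 2) * ((M - k + m) choose m)) = (\<Sum>k\<le>M. (k + 1) * ((M - k + m) choose m)) + (\<Sum>k\<le>M. ((M - k + m) choose m))"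
    by (simp add: sum.distrib[symmetric] algebra_simps)
  have "(\<Sum>k\<le>Suc M. (k + 1) * ((Suc M - k + m) choose m))
     = ((Suc M + m) choose m) + (\<Sum>k\<le>M. (k + 2) * ((M - k + m) choose m))"
    by (subst sum.atMost_Suc_shift) simp
  also have "\<dots> = ((Suc M + m) choose m) + (((M + m + 2) choose (m + 2)) + ((M + m + 1) choose (m + 1)))"
    using A Suc.IH hockey[of M m] by (simp only:)
  also have "\<dots> = (Suc M + m + 2) choose (m + 2)"
    by (simp add: numeral_2_eq_2)
  finally show ?case .
qed

lemma finite_configs: "finite V \<Longrightarrow> finite (configs V M)"
proof -
  assume "finite V"
  have "configs V M \<subseteq> {f. \<forall>x. (x \<in> V \<longrightarrow> f x \<in> {..M}) \<and> (x \<notin> V \<longrightarrow> f x = 0)}"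
  proof
    fix f assume f: "f \<in> configs V M"
    have "\<forall>x\<in>V. f x \<le> M"
    proof
      fix x assume "x \<in> V"
      then have "sum f V = f x + sum f (V - {x})" using \<open>finite V\<close> by (simp add: sum.remove)
      then show "f x \<le> M" using f unfolding configs_def by simp
    qed
    then show "f \<in> {f. \<forall>x. (x \<in> V \<longrightarrow> f x \<in> {..M}) \<and> (x \<notin> V \<longrightarrow> f x = 0)}" using f
      unfolding configs_def by auto
  qed
  then show ?thesis by (rule finite_subset) (intro finite_set_of_finite_funs \<open>finite V\<close>, simp)
qed

definition wt :: "'a set \<Rightarrow> ('a \<Rightarrow> nat) \<Rightarrow> nat" where
  "wt V b = (\<Prod>v\<in>V. b v + 1)"

lemma configs_single: "configs {v} M = {(\<lambda>_. 0)(v := M)}"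
  unfolding configs_def by (auto simp: fun_eq_iff)

lemma configs_insert_split:
  assumes "finite V" "v \<notin> V"
  shows "(\<Sum>b\<in>configs (insert v V) M. wt (insert v V) b)
       = (\<Sum>k\<le>M. (k + 1) * (\<Sum>b\<in>configs V (M - k). wt V b))"
proof -
  have "(\<Sum>k\<le>M. (k + 1) * (\<Sum>b\<in>configs V (M - k). wt V b))
      = (\<Sum>k\<le>M. \<Sum>b\<in>configs V (M - k). (k + 1) * wt V b)"
    by (simp add: sum_distrib_left)
  also have "\<dots> = (\<Sum>(k, b)\<in>Sigma {..M} (\<lambda>k. configs V (M - k)). (k + 1) * wt V b)"
    by (rule sum.Sigma) (auto intro: finite_configs assms)
  also have "\<dots> = (\<Sum>b\<in>configs (insert v V) M. wt (insert v V) b)"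
  proof (rule sum.reindex_bij_witness[where i = "\<lambda>b. (b v, b(v := 0))" and j = "\<lambda>(k, b). b(v := k)"])
    fix a assume a: "a \<in> Sigma {..M} (\<lambda>k. configs V (M - k))"
    then obtain k b where ab: "a = (k, b)" "k \<le> M" "b \<in> configs V (M - k)" by auto
    then have bv: "b v = 0" using assms unfolding configs_def by auto
    show "((case a of (k, b) \<Rightarrow> b(v := k)) v, (case a of (k, b) \<Rightarrow> b(v := k))(v := 0)) = a"
      using ab bv by (auto simp: fun_eq_iff)
    have "sum (b(v := k)) V = sum b V" using assms by (intro sum.cong) auto
    then show "(case a of (k, b) \<Rightarrow> b(v := k)) \<in> configs (insert v V) M"
      using ab assms unfolding configs_def by auto
    have "prod (\<lambda>z. (b(v := k)) z + 1) V = prod (\<lambda>z. b z + 1) V" using assms by (intro prod.cong) auto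
    then show "wt (insert v V) (case a of (k, b) \<Rightarrow> b(v := k)) = (case a of (k, b) \<Rightarrow> (k + 1) * wt V b)"
      using ab assms unfolding wt_def by simp
  next
    fix b assume b: "b \<in> configs (insert v V) M"
    show "(case (b v, b(v := 0)) of (k, b) \<Rightarrow> b(v := k)) = b" by auto
    have s: "sum b (insert v V) = M" using b unfolding configs_def by auto
    have "sum (b(v := 0)) V = sum b V" using assms by (intro sum.cong) auto
    then show "(b v, b(v := 0)) \<in> Sigma {..M} (\<lambda>k. configs V (M - k))"
      using b s assms unfolding configs_def by auto
  qed
  finally show ?thesis by simp
qed

lemma sum_wt: "finite V \<Longrightarrow> V \<noteq> {} \<Longrightarrow>
  (\<Sum>b\<in>configs V M. wt V b) = (M + 2 * card V - 1) choose (2 * card V - 1)"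
proof (induction V arbitrary: M rule: finite_ne_induct)
  case (singleton v)
  then show ?case by (simp add: configs_single wt_def)
next
  case (insert v V)
  have c: "card V \<ge> 1" using insert by (simp add: Suc_le_eq card_gt_0_iff)
  have "(\<Sum>b\<in>configs (insert v V) M. wt (insert v V) b)
       = (\<Sum>k\<le>M. (k + 1) * ((M - k + (2 * card V - 1)) choose (2 * card V - 1)))"
    unfolding configs_insert_split[OF insert(1,3)]
  proof (intro sum.cong refl)
    fix k assume "k \<in> {..M}"
    then show "(k + 1) * sum (wt V) (configs V (M - k)) = (k + 1) * ((M - k + (2 * card V - 1)) choose (2 * card V - 1))"
      using insert(4)[of "M - k"] c by (simp add: Suc_diff_le)
  qed
  also have "\<dots> = (M + (2 * card V - 1) + 2) choose ((2 * card V - 1) + 2)" by (rule hockey2)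
  also have "\<dots> = (M + 2 * card (insert v V) - 1) choose (2 * card (insert v V) - 1)"
    using insert c by simp
  finally show ?case .
qed

lemma sum_wt_marg:
  assumes "finite V" "x \<in> V" "card V \<ge> 2" "c \<le> M"
  shows "(\<Sum>b\<in>{b\<in>configs V M. b x = c}. wt V b) = (c + 1) * ((M - c + 2 * card V - 3) choose (2 * card V - 3))"
proof -
  let ?W = "V - {x}"
  have fW: "finite ?W" and cW: "card ?W = card V - 1" using assms by auto
  have neW: "?W \<noteq> {}" proof
    assume h: "?W = {}"
    have "card ?W = 0" by (subst h) simp
    then show False using cW assms(3) by linarith
  qed
  have "(\<Sum>b\<in>{b\<in>configs V M. b x = c}. wt V b) = (\<Sum>b\<in>configs ?W (M - c). (c + 1) * wt ?W b)"
  proof (rule sum.reindex_bij_witness[where i = "\<lambda>b. b(x := c)" and j = "\<lambda>b. b(x := 0)"])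
    fix b assume b: "b \<in> {b\<in>configs V M. b x = c}"
    then show "(b(x := 0))(x := c) = b" by auto
    have s: "sum b V = M" "\<forall>z. z \<notin> V \<longrightarrow> b z = 0" using b unfolding configs_def by auto
    have "sum b V = b x + sum b ?W" using assms by (simp add: sum.remove)
    moreover have "sum (b(x := 0)) ?W = sum b ?W" by (intro sum.cong) auto
    ultimately show "b(x := 0) \<in> configs ?W (M - c)" using s b unfolding configs_def by auto
    have "prod (\<lambda>z. b z + 1) V = (b x + 1) * prod (\<lambda>z. b z + 1) ?W" using assms by (simp add: prod.remove)
    moreover have "prod (\<lambda>z. (b(x := 0)) z + 1) ?W = prod (\<lambda>z. b z + 1) ?W" by (intro prod.cong) auto
    ultimately show "(c + 1) * wt ?W (b(x := 0)) = wt V b" using b unfolding wt_def by simp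
  next
    fix b assume b: "b \<in> configs ?W (M - c)"
    have s: "sum b ?W = M - c" "\<forall>z. z \<notin> ?W \<longrightarrow> b z = 0" using b unfolding configs_def by auto
    then show "(b(x := c))(x := 0) = b" by (auto simp: fun_eq_iff)
    have "sum (b(x := c)) V = c + sum (b(x := c)) ?W" using assms by (simp add: sum.remove)
    moreover have "sum (b(x := c)) ?W = sum b ?W" by (intro sum.cong) auto
    ultimately show "b(x := c) \<in> {b\<in>configs V M. b x = c}" using s assms unfolding configs_def by auto
  qed
  also have "\<dots> = (c + 1) * ((M - c + 2 * card ?W - 1) choose (2 * card ?W - 1))"
    by (simp only: sum_distrib_left[symmetric] sum_wt[OF fW neW])
  also have "\<dots> = (c + 1) * ((M - c + 2 * card V - 3) choose (2 * card V - 3))"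
  proof -
    have "2 * card ?W - 1 = 2 * card V - 3" "M - c + 2 * card ?W - 1 = M - c + 2 * card V - 3"
      using cW assms(3) by linarith+
    then show ?thesis by (simp only:)
  qed
  finally show ?thesis .
qed




definition stp :: "('a \<Rightarrow> nat) \<Rightarrow> 'a \<Rightarrow> 'a \<Rightarrow> nat \<Rightarrow> nat \<Rightarrow> ('a \<Rightarrow> nat)" where
  "stp a x y u1 u2 = a(x := a x - u1 + u2, y := a y - u2 + u1)"

definition cnt :: "('a \<Rightarrow> nat) \<Rightarrow> 'a \<Rightarrow> 'a \<Rightarrow> ('a \<Rightarrow> nat) \<Rightarrow> nat" where
  "cnt a x y b = card {p \<in> {0..a x} \<times> {0..a y}. stp a x y (fst p) (snd p) = b}"

lemma sum_split2: "finite V \<Longrightarrow> x \<in> V \<Longrightarrow> y \<in> V \<Longrightarrow> x \<noteq> y \<Longrightarrow>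
   sum f V = f x + f y + sum f (V - {x, y})"
proof -
  assume a: "finite V" "x \<in> V" "y \<in> V" "x \<noteq> y"
  have "sum f V = f x + sum f (V - {x})" using a by (simp add: sum.remove)
  also have "sum f (V - {x}) = f y + sum f (V - {x} - {y})" using a by (intro sum.remove) auto
  also have "V - {x} - {y} = V - {x, y}" by auto
  finally show ?thesis by (simp add: add.assoc)
qed

lemma prod_split2: "finite V \<Longrightarrow> x \<in> V \<Longrightarrow> y \<in> V \<Longrightarrow> x \<noteq> y \<Longrightarrow>
   prod f V = f x * f y * prod f (V - {x, y})"
proof -
  assume a: "finite V" "x \<in> V" "y \<in> V" "x \<noteq> y"
  have "prod f V = f x * prod f (V - {x})" using a by (simp add: prod.remove)
  also have "prod f (V - {x}) = f y * prod f (V - {x} - {y})" using a by (intro prod.remove) auto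
  also have "V - {x} - {y} = V - {x, y}" by auto
  finally show ?thesis by (simp add: mult.assoc)
qed

lemma sum_ind_cnt: "(\<Sum>u1\<in>{0..a x}. \<Sum>u2\<in>{0..a y}. indicator {b} (stp a x y u1 u2) :: real) = real (cnt a x y b)"
proof -
  have "(\<Sum>u1\<in>{0..a x}. \<Sum>u2\<in>{0..a y}. indicator {b} (stp a x y u1 u2) :: real)
      = (\<Sum>p\<in>{0..a x} \<times> {0..a y}. indicator {b} (stp a x y (fst p) (snd p)))"
    by (subst sum.cartesian_product) (rule sum.cong; simp add: split_beta)
  also have "\<dots> = (\<Sum>p\<in>{0..a x} \<times> {0..a y}. indicator {p. stp a x y (fst p) (snd p) = b} p)"
    by (rule sum.cong) (auto simp: indicator_def)
  also have "\<dots> = real (card (({0..a x} \<times> {0..a y}) \<inter> {p. stp a x y (fst p) (snd p) = b}))"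
    by (simp add: indicator_def sum.If_cases)
  also have "({0..a x} \<times> {0..a y}) \<inter> {p. stp a x y (fst p) (snd p) = b} = {p \<in> {0..a x} \<times> {0..a y}. stp a x y (fst p) (snd p) = b}"
    by auto
  finally show ?thesis unfolding cnt_def .
qed

lemma stp_x: "x \<noteq> y \<Longrightarrow> stp a x y u1 u2 x = a x - u1 + u2"
  and stp_y: "stp a x y u1 u2 y = a y - u2 + u1"
  and stp_o: "z \<noteq> x \<Longrightarrow> z \<noteq> y \<Longrightarrow> stp a x y u1 u2 z = a z"
  by (auto simp: stp_def)

lemma stp_back: "x \<noteq> y \<Longrightarrow> u1 \<le> a x \<Longrightarrow> u2 \<le> a y \<Longrightarrow> stp (stp a x y u1 u2) x y u2 u1 = a"
  by (auto simp: stp_def fun_eq_iff)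

lemma cnt_swap_mem: "x \<noteq> y \<Longrightarrow> p \<in> {p \<in> {0..a x} \<times> {0..a y}. stp a x y (fst p) (snd p) = b} \<Longrightarrow>
   prod.swap p \<in> {p \<in> {0..b x} \<times> {0..b y}. stp b x y (fst p) (snd p) = a}"
proof -
  assume xy: "x \<noteq> y" and p: "p \<in> {p \<in> {0..a x} \<times> {0..a y}. stp a x y (fst p) (snd p) = b}"
  obtain u1 u2 where u: "p = (u1, u2)" "u1 \<le> a x" "u2 \<le> a y" "b = stp a x y u1 u2" using p by auto
  show ?thesis using u xy stp_back[OF xy u(2,3)] by (simp add: stp_x stp_y) arith
qed

lemma cnt_sym_le: "x \<noteq> y \<Longrightarrow> cnt a x y b \<le> cnt b x y a"
proof -
  assume xy: "x \<noteq> y"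
  have "prod.swap ` {p \<in> {0..a x} \<times> {0..a y}. stp a x y (fst p) (snd p) = b} \<subseteq> {p \<in> {0..b x} \<times> {0..b y}. stp b x y (fst p) (snd p) = a}"
    using cnt_swap_mem[OF xy, of _ a b] by blast
  then show ?thesis unfolding cnt_def
    by (rule card_inj_on_le[where f = prod.swap, rotated]) auto
qed

lemma cnt_sym: "x \<noteq> y \<Longrightarrow> cnt a x y b = cnt b x y a"
  using cnt_sym_le[of x y a b] cnt_sym_le[of x y b a] by simp

lemma ie_dist_Suc: "ie_dist E \<xi> (Suc t) = ie_dist E \<xi> t \<bind> ie_step E"
  by (simp add: ie_dist_def)

lemma funpow_bind: fixes f :: "'a \<Rightarrow> 'a pmf" shows "((\<lambda>p. bind_pmf p f) ^^ n) q = bind_pmf q (\<lambda>a. ((\<lambda>p. bind_pmf p f) ^^ n) (return_pmf a))"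
proof (induction n)
  case 0 then show ?case by (simp add: bind_return_pmf')
next
  case (Suc n)
  then show ?case by (simp add: bind_assoc_pmf)
qed

lemma ie_dist_add: "ie_dist E \<xi> (t + K) = ie_dist E \<xi> t \<bind> (\<lambda>a. ie_dist E a K)"
proof -
  have "ie_dist E \<xi> (t + K) = ((\<lambda>p. bind_pmf p (ie_step E)) ^^ K) (ie_dist E \<xi> t)"
    unfolding ie_dist_def by (simp only: add.commute[of t K] funpow_add o_apply)
  also have "\<dots> = ie_dist E \<xi> t \<bind> (\<lambda>a. ie_dist E a K)"
    unfolding ie_dist_def[of E _ K] by (rule funpow_bind)
  finally show ?thesis .
qed

lemma pmf_bind_finite: "finite S \<Longrightarrow> set_pmf p \<subseteq> S \<Longrightarrow> pmf (p \<bind> f) b = (\<Sum>a\<in>S. pmf p a * pmf (f a) b)"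
  unfolding pmf_bind
  by (subst integral_measure_pmf_real[of S]) (auto simp: mult.commute)

definition mv :: "('a \<Rightarrow> nat) \<Rightarrow> 'a \<Rightarrow> 'a \<Rightarrow> ('a \<Rightarrow> nat)" where
  "mv \<eta> u w = (\<lambda>z. if z = u \<and> z = w then \<eta> z else if z = u then \<eta> z - 1 else if z = w then \<eta> z + 1 else \<eta> z)"

lemma mv_stp: "u \<noteq> w \<Longrightarrow> mv \<eta> u w = stp \<eta> u w 1 0"
  by (auto simp: mv_def stp_def fun_eq_iff)

lemma mv_same: "mv \<eta> u u = \<eta>"
  by (auto simp: mv_def fun_eq_iff)

lemma mv_comp: "1 \<le> \<eta> u \<Longrightarrow> mv (mv \<eta> u v) v w = mv \<eta> u w"
  by (auto simp: mv_def fun_eq_iff)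

lemma contract:
  fixes \<nu> :: "'b \<Rightarrow> real" and Q :: "'b \<Rightarrow> 'b \<Rightarrow> real"
  assumes fin: "finite S" and s0: "sum \<nu> S = 0" and ge: "\<And>a b. a \<in> S \<Longrightarrow> b \<in> S \<Longrightarrow> \<delta> \<le> Q a b"
    and s1: "\<And>a. a \<in> S \<Longrightarrow> sum (Q a) S = 1"
  shows "(\<Sum>b\<in>S. \<bar>\<Sum>a\<in>S. \<nu> a * Q a b\<bar>) \<le> (1 - real (card S) * \<delta>) * (\<Sum>a\<in>S. \<bar>\<nu> a\<bar>)"
proof -
  have e: "(\<Sum>a\<in>S. \<nu> a * Q a b) = (\<Sum>a\<in>S. \<nu> a * (Q a b - \<delta>))" for b
  proof -
    have "(\<Sum>a\<in>S. \<nu> a * (Q a b - \<delta>)) = (\<Sum>a\<in>S. \<nu> a * Q a b) - (\<Sum>a\<in>S. \<nu> a) * \<delta>"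
      by (simp add: right_diff_distrib sum_subtractf sum_distrib_right)
    then show ?thesis using s0 by simp
  qed
  have le: "\<bar>\<Sum>a\<in>S. \<nu> a * Q a b\<bar> \<le> (\<Sum>a\<in>S. \<bar>\<nu> a\<bar> * (Q a b - \<delta>))" if b: "b \<in> S" for b
  proof -
    have "\<bar>\<Sum>a\<in>S. \<nu> a * (Q a b - \<delta>)\<bar> \<le> (\<Sum>a\<in>S. \<bar>\<nu> a * (Q a b - \<delta>)\<bar>)" by (rule sum_abs)
    also have "\<dots> = (\<Sum>a\<in>S. \<bar>\<nu> a\<bar> * (Q a b - \<delta>))"
      using ge b by (intro sum.cong refl) (simp add: abs_mult)
    finally show ?thesis unfolding e .
  qed
  have "(\<Sum>b\<in>S. \<bar>\<Sum>a\<in>S. \<nu> a * Q a b\<bar>) \<le> (\<Sum>b\<in>S. \<Sum>a\<in>S. \<bar>\<nu> a\<bar> * (Q a b - \<delta>))"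
    by (intro sum_mono le)
  also have "\<dots> = (\<Sum>a\<in>S. \<bar>\<nu> a\<bar> * (\<Sum>b\<in>S. Q a b - \<delta>))"
    by (subst sum.swap) (simp add: sum_distrib_left)
  also have "\<dots> = (\<Sum>a\<in>S. \<bar>\<nu> a\<bar> * (1 - real (card S) * \<delta>))"
    using s1 by (intro sum.cong refl) (simp add: sum_subtractf)
  also have "\<dots> = (1 - real (card S) * \<delta>) * (\<Sum>a\<in>S. \<bar>\<nu> a\<bar>)"
    by (simp add: sum_distrib_right mult.commute)
  finally show ?thesis .
qed

locale ieg =
  fixes V :: "'a set" and E :: "('a \<times> 'a) set"
  assumes sg: "simple_graph V E" and conn: "connected_graph V E" and two: "card V \<ge> 2"
begin

lemma finV: "finite V" and EV: "E \<subseteq> V \<times> V" and irr: "(x, x) \<notin> E"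
  using sg unfolding simple_graph_def by auto

lemma finE: "finite E"
  using EV finV by (simp add: finite_subset)

lemma Ene: "E \<noteq> {}"
proof -
  have "V \<noteq> {}" using two by auto
  then obtain x where x: "x \<in> V" by auto
  have c1: "card (V - {x}) \<ge> 1" using two x finV by simp
  have "V - {x} \<noteq> {}"
  proof
    assume h: "V - {x} = {}"
    have "card (V - {x}) = 0" by (subst h) simp
    then show False using c1 by simp
  qed
  then obtain y where y: "y \<in> V - {x}" by auto
  have xy: "x \<in> V" "y \<in> V" "x \<noteq> y" using x y by auto
  then have "(x, y) \<in> E\<^sup>*" using conn unfolding connected_graph_def by auto
  then show ?thesis using xy(3) by (cases rule: converse_rtranclE) auto
qed

lemma ie_step_stp: "ie_step E a = pmf_of_set E \<bind> (\<lambda>(x, y). pmf_of_set {0..a x} \<bind> (\<lambda>u1.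
       pmf_of_set {0..a y} \<bind> (\<lambda>u2. return_pmf (stp a x y u1 u2))))"
  unfolding ie_step_def stp_def ..

lemma set_ie_stepD: "b \<in> set_pmf (ie_step E a) \<Longrightarrow> \<exists>x y u1 u2. (x, y) \<in> E \<and> u1 \<le> a x \<and> u2 \<le> a y \<and> b = stp a x y u1 u2"
  unfolding ie_step_stp using finE Ene by (auto simp: set_bind_pmf)

lemma set_ie_stepI: "(x, y) \<in> E \<Longrightarrow> u1 \<le> a x \<Longrightarrow> u2 \<le> a y \<Longrightarrow> stp a x y u1 u2 \<in> set_pmf (ie_step E a)"
  unfolding ie_step_stp using finE Ene
  apply (simp add: set_bind_pmf)
  apply (rule bexI[of _ "(x, y)"])
   apply simp
   apply (rule bexI[of _ u1])
    apply (rule bexI[of _ u2])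
     apply auto
  done

lemma pmf_ie_step0: "pmf (ie_step E a) b = (\<Sum>e\<in>E. (\<Sum>u1\<in>{0..a (fst e)}. \<Sum>u2\<in>{0..a (snd e)}.
    indicator {b} (stp a (fst e) (snd e) u1 u2)) / (real (card {0..a (fst e)}) * real (card {0..a (snd e)}))) / real (card E)"
  unfolding ie_step_stp using finE Ene
  by (simp add: pmf_bind integral_pmf_of_set split_beta del: card_atLeastAtMost)

lemma pmf_ie_step: "pmf (ie_step E a) b = (\<Sum>e\<in>E. real (cnt a (fst e) (snd e) b) / (real (a (fst e) + 1) * real (a (snd e) + 1))) / real (card E)"
  unfolding pmf_ie_step0 by (simp add: sum_ind_cnt)

lemma db_edge:
  assumes "x \<in> V" "y \<in> V" "x \<noteq> y"
  shows "real (wt V a) * (real (cnt a x y b) / (real (a x + 1) * real (a y + 1)))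
       = real (wt V b) * (real (cnt b x y a) / (real (b x + 1) * real (b y + 1)))"
proof -
  define W where "W = (\<lambda>a::'a \<Rightarrow> nat. \<Prod>v\<in>V - {x, y}. a v + 1)"
  have wt: "wt V c = (c x + 1) * (c y + 1) * W c" for c
    unfolding wt_def W_def using prod_split2[OF finV assms] .
  have L: "real (wt V c) * (real (cnt c x y d) / (real (c x + 1) * real (c y + 1))) = real (W c) * real (cnt c x y d)" for c d
  proof -
    have g: "(A * B * w) * (n / (A * B)) = w * n" if "A \<noteq> 0" "B \<noteq> 0" for A B w n :: real
      using that by (simp add: field_simps)
    show ?thesis unfolding wt of_nat_mult by (rule g) auto
  qed
  have C: "cnt a x y b = cnt b x y a" using cnt_sym[OF assms(3)] .
  show ?thesis
  proof (cases "cnt a x y b = 0")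
    case True
    then show ?thesis unfolding L using C by simp
  next
    case False
    then have "{p \<in> {0..a x} \<times> {0..a y}. stp a x y (fst p) (snd p) = b} \<noteq> {}"
      unfolding cnt_def by (metis card.empty)
    then obtain u1 u2 where "b = stp a x y u1 u2" by auto
    then have "\<forall>z\<in>V - {x, y}. b z = a z" by (auto simp: stp_o)
    then have "W a = W b" unfolding W_def by (intro prod.cong) auto
    then show ?thesis unfolding L using C by simp
  qed
qed

lemma detailed_balance: "real (wt V a) * pmf (ie_step E a) b = real (wt V b) * pmf (ie_step E b) a"
proof -
  have "real (wt V a) * pmf (ie_step E a) b = (\<Sum>e\<in>E. real (wt V a) * (real (cnt a (fst e) (snd e) b) / (real (a (fst e) + 1) * real (a (snd e) + 1)))) / real (card E)"
    unfolding pmf_ie_step by (simp add: sum_distrib_left)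
  also have "\<dots> = (\<Sum>e\<in>E. real (wt V b) * (real (cnt b (fst e) (snd e) a) / (real (b (fst e) + 1) * real (b (snd e) + 1)))) / real (card E)"
  proof (intro arg_cong[where f = "\<lambda>t. t / real (card E)"] sum.cong refl)
    fix e assume "e \<in> E"
    then have "fst e \<in> V" "snd e \<in> V" "fst e \<noteq> snd e" using EV irr by (cases e; auto)+
    then show "real (wt V a) * (real (cnt a (fst e) (snd e) b) / (real (a (fst e) + 1) * real (a (snd e) + 1)))
      = real (wt V b) * (real (cnt b (fst e) (snd e) a) / (real (b (fst e) + 1) * real (b (snd e) + 1)))"
      by (rule db_edge)
  qed
  also have "\<dots> = real (wt V b) * pmf (ie_step E b) a"
    unfolding pmf_ie_step by (simp add: sum_distrib_left)
  finally show ?thesis .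
qed

lemma stp_configs:
  assumes a: "a \<in> configs V M" and e: "(x, y) \<in> E" and u: "u1 \<le> a x" "u2 \<le> a y"
  shows "stp a x y u1 u2 \<in> configs V M"
proof -
  have xy: "x \<in> V" "y \<in> V" "x \<noteq> y" using e EV irr by auto
  let ?b = "stp a x y u1 u2"
  have "sum ?b V = ?b x + ?b y + sum ?b (V - {x, y})" by (rule sum_split2[OF finV xy])
  also have "sum ?b (V - {x, y}) = sum a (V - {x, y})" by (intro sum.cong) (auto simp: stp_o)
  also have "?b x + ?b y + sum a (V - {x, y}) = a x + a y + sum a (V - {x, y})"
    using u xy by (simp add: stp_x stp_y)
  also have "\<dots> = sum a V" by (rule sum_split2[OF finV xy, symmetric])
  finally have s: "sum ?b V = sum a V" .
  have "?b z = 0" if "z \<notin> V" for z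
  proof -
    have "z \<noteq> x" "z \<noteq> y" using that xy by auto
    then show ?thesis using a that by (simp add: stp_o configs_def)
  qed
  then show ?thesis using a s unfolding configs_def by auto
qed

lemma step_support: "a \<in> configs V M \<Longrightarrow> set_pmf (ie_step E a) \<subseteq> configs V M"
  using set_ie_stepD stp_configs by blast

lemma dist_support: "\<xi> \<in> configs V M \<Longrightarrow> set_pmf (ie_dist E \<xi> t) \<subseteq> configs V M"
proof (induction t)
  case 0 then show ?case by (simp add: ie_dist_def)
next
  case (Suc t)
  then show ?case using step_support unfolding ie_dist_Suc by (auto simp: set_bind_pmf)
qed

lemma self_loop: "a \<in> set_pmf (ie_step E a)"
proof -
  obtain x y where "(x, y) \<in> E" using Ene by auto
  then have "stp a x y 0 0 \<in> set_pmf (ie_step E a)" by (rule set_ie_stepI) auto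
  moreover have "stp a x y 0 0 = a" by (simp add: stp_def)
  ultimately show ?thesis by simp
qed

definition Tr where "Tr = {(a, b). b \<in> set_pmf (ie_step E a)}"

lemma reach_mv: "(u, w) \<in> E\<^sup>* \<Longrightarrow> 1 \<le> \<eta> u \<Longrightarrow> (\<eta>, mv \<eta> u w) \<in> Tr\<^sup>*"
proof (induction u arbitrary: \<eta> rule: converse_rtrancl_induct)
  case base
  then show ?case by (simp add: mv_same)
next
  case (step u v)
  have uv: "u \<noteq> v" using step(1) irr by auto
  let ?\<eta>1 = "mv \<eta> u v"
  have "?\<eta>1 \<in> set_pmf (ie_step E \<eta>)"
    unfolding mv_stp[OF uv] by (rule set_ie_stepI[OF step(1)]) (use step(4) in auto)
  then have 1: "(\<eta>, ?\<eta>1) \<in> Tr" by (simp add: Tr_def)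
  have "1 \<le> ?\<eta>1 v" using uv by (simp add: mv_def)
  then have "(?\<eta>1, mv ?\<eta>1 v w) \<in> Tr\<^sup>*" by (rule step.IH)
  then have "(?\<eta>1, mv \<eta> u w) \<in> Tr\<^sup>*" using mv_comp[of \<eta> u v w, OF step(4)] by simp
  with 1 show ?case by (rule converse_rtrancl_into_rtrancl)
qed

lemma stp_configs2:
  assumes a: "a \<in> configs V M" and xy: "x \<in> V" "y \<in> V" "x \<noteq> y" and u: "u1 \<le> a x" "u2 \<le> a y"
  shows "stp a x y u1 u2 \<in> configs V M"
proof -
  let ?b = "stp a x y u1 u2"
  have "sum ?b V = ?b x + ?b y + sum ?b (V - {x, y})" by (rule sum_split2[OF finV xy])
  also have "sum ?b (V - {x, y}) = sum a (V - {x, y})" by (intro sum.cong) (auto simp: stp_o)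
  also have "?b x + ?b y + sum a (V - {x, y}) = a x + a y + sum a (V - {x, y})"
    using u xy by (simp add: stp_x stp_y)
  also have "\<dots> = sum a V" by (rule sum_split2[OF finV xy, symmetric])
  finally have s: "sum ?b V = sum a V" .
  have "?b z = 0" if "z \<notin> V" for z
  proof -
    have "z \<noteq> x" "z \<noteq> y" using that xy by auto
    then show ?thesis using a that by (simp add: stp_o configs_def)
  qed
  then show ?thesis using a s unfolding configs_def by auto
qed

lemma mv_configs: "\<eta> \<in> configs V M \<Longrightarrow> u \<in> V \<Longrightarrow> w \<in> V \<Longrightarrow> 1 \<le> \<eta> u \<Longrightarrow> mv \<eta> u w \<in> configs V M"
  by (cases "u = w") (auto simp: mv_same mv_stp intro: stp_configs2)

lemma irreducible:
  assumes b: "b \<in> configs V M"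
  shows "a \<in> configs V M \<Longrightarrow> (a, b) \<in> Tr\<^sup>*"
proof -
  have "\<forall>a\<in>configs V M. (\<Sum>v\<in>V. a v - b v) = n \<longrightarrow> (a, b) \<in> Tr\<^sup>*" for n
  proof (induction n)
    case 0
    show ?case
    proof (intro ballI impI)
      fix a assume a: "a \<in> configs V M" and s0: "(\<Sum>v\<in>V. a v - b v) = 0"
      have le: "a v \<le> b v" if "v \<in> V" for v using s0 finV that by simp
      have eq: "sum a V = sum b V" using a b unfolding configs_def by simp
      have "a = b"
      proof
        fix z show "a z = b z"
        proof (cases "z \<in> V")
          case True then show ?thesis using sum_mono_inv[OF eq le True finV] by simp
        next
          case False then show ?thesis using a b unfolding configs_def by simp
        qed
      qed
      then show "(a, b) \<in> Tr\<^sup>*" by simp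
    qed
  next
    case (Suc n)
    show ?case
    proof (intro ballI impI)
      fix a assume a: "a \<in> configs V M" and sS: "(\<Sum>v\<in>V. a v - b v) = Suc n"
      obtain u where u: "u \<in> V" "b u < a u"
      proof (rule ccontr)
        assume "\<not> thesis"
        then have "\<forall>v\<in>V. a v - b v = 0" using that by force
        then have "(\<Sum>v\<in>V. a v - b v) = 0" by simp
        then show False using sS by simp
      qed
      have eq: "sum a V = sum b V" using a b unfolding configs_def by simp
      obtain w where w: "w \<in> V" "a w < b w"
      proof (rule ccontr)
        assume "\<not> thesis"
        then have "\<forall>v\<in>V. b v \<le> a v" using that by force
        then have "sum b V < sum a V" using u finV by (intro sum_strict_mono_ex1) auto
        then show False using eq by simp
      qed
      have uw: "u \<noteq> w" using u w by auto
      let ?a = "mv a u w"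
      have a': "?a \<in> configs V M" using mv_configs[OF a u(1) w(1)] u by simp
      have "(\<Sum>v\<in>V. ?a v - b v) = (?a u - b u) + (?a w - b w) + (\<Sum>v\<in>V - {u, w}. ?a v - b v)"
        by (rule sum_split2[OF finV u(1) w(1) uw])
      also have "(\<Sum>v\<in>V - {u, w}. ?a v - b v) = (\<Sum>v\<in>V - {u, w}. a v - b v)"
        by (intro sum.cong) (auto simp: mv_def)
      also have "(?a u - b u) + (?a w - b w) = (a u - b u) + (a w - b w) - 1"
        using u w uw by (simp add: mv_def)
      finally have "(\<Sum>v\<in>V. ?a v - b v) = (a u - b u) + (a w - b w) - 1 + (\<Sum>v\<in>V - {u, w}. a v - b v)" .
      moreover have "(\<Sum>v\<in>V. a v - b v) = (a u - b u) + (a w - b w) + (\<Sum>v\<in>V - {u, w}. a v - b v)"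
        by (rule sum_split2[OF finV u(1) w(1) uw])
      ultimately have "(\<Sum>v\<in>V. ?a v - b v) = n" using sS u by simp
      then have 2: "(?a, b) \<in> Tr\<^sup>*" using Suc.IH a' by blast
      have "(u, w) \<in> E\<^sup>*" using conn u w unfolding connected_graph_def by auto
      then have 1: "(a, ?a) \<in> Tr\<^sup>*" using u by (intro reach_mv) auto
      show "(a, b) \<in> Tr\<^sup>*" using 1 2 by simp
    qed
  qed
  then show "a \<in> configs V M \<Longrightarrow> (a, b) \<in> Tr\<^sup>*" by blast
qed

lemma reach_dist: "(a, b) \<in> Tr\<^sup>* \<Longrightarrow> \<exists>n. b \<in> set_pmf (ie_dist E a n)"
proof (induction rule: rtrancl_induct)
  case base
  have "a \<in> set_pmf (ie_dist E a 0)" by (simp add: ie_dist_def)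
  then show ?case by blast
next
  case (step b c)
  then obtain n where "b \<in> set_pmf (ie_dist E a n)" by blast
  then have "c \<in> set_pmf (ie_dist E a (Suc n))"
    using step(2) unfolding ie_dist_Suc Tr_def by (auto simp: set_bind_pmf)
  then show ?case by blast
qed

lemma dist_mono: "b \<in> set_pmf (ie_dist E a n) \<Longrightarrow> n \<le> m \<Longrightarrow> b \<in> set_pmf (ie_dist E a m)"
proof (induction m)
  case 0 then show ?case by simp
next
  case (Suc m)
  show ?case
  proof (cases "n = Suc m")
    case True then show ?thesis using Suc by simp
  next
    case False
    then have "b \<in> set_pmf (ie_dist E a m)" using Suc by simp
    then show ?thesis unfolding ie_dist_Suc using self_loop[of b] by (auto simp: set_bind_pmf)
  qed
qed

end

locale iegM = ieg + fixes M :: nat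
begin

lemma finS: "finite (configs V M)"
  by (rule finite_configs[OF finV])

lemma S_ne: "configs V M \<noteq> {}"
proof -
  obtain v where v: "v \<in> V" using two by (metis card.empty ex_in_conv not_numeral_le_zero)
  have "(\<lambda>_. 0)(v := M) \<in> configs V M" using v finV unfolding configs_def
    by (auto simp: fun_upd_apply sum.delta)
  then show ?thesis by auto
qed

lemma wt_pos: "1 \<le> wt V b"
  unfolding wt_def by (rule prod_ge_1) simp

definition Z :: nat where "Z = (\<Sum>b\<in>configs V M. wt V b)"

lemma Z_pos: "0 < Z"
proof -
  obtain b where b: "b \<in> configs V M" using S_ne by auto
  have "wt V b \<le> Z" unfolding Z_def by (rule member_le_sum[OF b]) (auto simp: finS)
  then show ?thesis using wt_pos[of b] by simp
qed

definition pi :: "('a \<Rightarrow> nat) \<Rightarrow> real" where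
  "pi b = (if b \<in> configs V M then real (wt V b) / real Z else 0)"

lemma pi_nonneg: "0 \<le> pi b"
  unfolding pi_def by simp

lemma sum_pi: "(\<Sum>b\<in>configs V M. pi b) = 1"
proof -
  have "(\<Sum>b\<in>configs V M. pi b) = (\<Sum>b\<in>configs V M. real (wt V b)) / real Z"
    unfolding pi_def by (simp add: sum_divide_distrib)
  also have "(\<Sum>b\<in>configs V M. real (wt V b)) = real Z" unfolding Z_def by simp
  also have "real Z / real Z = 1" using Z_pos by simp
  finally show ?thesis .
qed

lemma nn_pi: "(\<integral>\<^sup>+x. ennreal (pi x) \<partial>count_space UNIV) = 1"
proof -
  have "(\<integral>\<^sup>+x. ennreal (pi x) \<partial>count_space UNIV) = (\<Sum>x\<in>configs V M. ennreal (pi x))"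
    by (rule nn_integral_count_space'[OF finS]) (auto simp: pi_def)
  also have "\<dots> = ennreal (\<Sum>x\<in>configs V M. pi x)" by (rule sum_ennreal) (rule pi_nonneg)
  finally show ?thesis by (simp add: sum_pi)
qed

definition pip :: "('a \<Rightarrow> nat) pmf" where "pip = embed_pmf pi"

lemma pmf_pip: "pmf pip b = pi b"
  unfolding pip_def by (rule pmf_embed_pmf[OF pi_nonneg nn_pi])

lemma set_pip: "set_pmf pip \<subseteq> configs V M"
  by (auto simp: set_pmf_iff pmf_pip pi_def split: if_splits)

lemma stat1: "bind_pmf pip (ie_step E) = pip"
proof (rule pmf_eqI)
  fix b
  have "pmf (bind_pmf pip (ie_step E)) b = (\<Sum>a\<in>configs V M. pi a * pmf (ie_step E a) b)"
    by (subst pmf_bind_finite[OF finS set_pip]) (simp add: pmf_pip)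
  also have "\<dots> = pi b"
  proof (cases "b \<in> configs V M")
    case True
    have "(\<Sum>a\<in>configs V M. pi a * pmf (ie_step E a) b) = (\<Sum>a\<in>configs V M. real (wt V a) * pmf (ie_step E a) b) / real Z"
      unfolding pi_def by (simp add: sum_divide_distrib)
    also have "\<dots> = (\<Sum>a\<in>configs V M. real (wt V b) * pmf (ie_step E b) a) / real Z"
      by (simp add: detailed_balance)
    also have "\<dots> = real (wt V b) * (\<Sum>a\<in>configs V M. pmf (ie_step E b) a) / real Z"
      by (simp add: sum_distrib_left)
    also have "(\<Sum>a\<in>configs V M. pmf (ie_step E b) a) = 1"
      by (rule sum_pmf_eq_1[OF finS step_support[OF True]])
    finally show ?thesis using True by (simp add: pi_def)
  next
    case False
    have "pmf (ie_step E a) b = 0" if "a \<in> configs V M" for a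
      using step_support[OF that] False by (auto simp: pmf_eq_0_set_pmf)
    then show ?thesis using False by (simp add: pi_def)
  qed
  finally show "pmf (bind_pmf pip (ie_step E)) b = pmf pip b" by (simp add: pmf_pip)
qed

lemma statK: "bind_pmf pip (\<lambda>a. ie_dist E a K) = pip"
proof -
  have "bind_pmf pip (\<lambda>a. ie_dist E a K) = ((\<lambda>p. bind_pmf p (ie_step E)) ^^ K) pip"
    unfolding ie_dist_def by (rule funpow_bind[symmetric])
  also have "\<dots> = pip"
    by (induction K) (simp_all add: stat1)
  finally show ?thesis .
qed

lemma conv:
  assumes xi: "\<xi> \<in> configs V M" and b: "b \<in> configs V M"
  shows "(\<lambda>t. pmf (ie_dist E \<xi> t) b) \<longlonglongrightarrow> pi b"
proof -
  let ?S = "configs V M"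
  have "\<forall>p\<in>?S \<times> ?S. \<exists>n. snd p \<in> set_pmf (ie_dist E (fst p) n)"
    using irreducible reach_dist by auto
  then obtain f where f: "\<forall>p\<in>?S \<times> ?S. snd p \<in> set_pmf (ie_dist E (fst p) (f p))"
    by (metis bchoice)
  define K where "K = Suc (Max (f ` (?S \<times> ?S)))"
  have Kpos: "0 < K" unfolding K_def by simp
  define Q where "Q = (\<lambda>a c. pmf (ie_dist E a K) c)"
  have Qpos: "0 < Q a c" if "a \<in> ?S" "c \<in> ?S" for a c
  proof -
    have "f (a, c) \<le> Max (f ` (?S \<times> ?S))" using that finS by (intro Max_ge) auto
    then have "f (a, c) \<le> K" unfolding K_def by simp
    moreover have "c \<in> set_pmf (ie_dist E a (f (a, c)))" using f that by auto
    ultimately have "c \<in> set_pmf (ie_dist E a K)" by (intro dist_mono[of c a "f (a, c)" K])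
    then show ?thesis unfolding Q_def by (simp add: pmf_positive)
  qed
  define \<delta> where "\<delta> = Min ((\<lambda>p. Q (fst p) (snd p)) ` (?S \<times> ?S))"
  have dpos: "0 < \<delta>" unfolding \<delta>_def using finS S_ne Qpos by (subst Min_gr_iff) auto
  have dle: "\<delta> \<le> Q a c" if "a \<in> ?S" "c \<in> ?S" for a c
  proof -
    have "Q a c \<in> (\<lambda>p. Q (fst p) (snd p)) ` (?S \<times> ?S)" using that by (intro image_eqI[of _ _ "(a, c)"]) auto
    then show ?thesis unfolding \<delta>_def using finS by (intro Min_le) auto
  qed
  have Qs: "sum (Q a) ?S = 1" if "a \<in> ?S" for a
    unfolding Q_def by (rule sum_pmf_eq_1[OF finS dist_support[OF that]])
  define \<rho> where "\<rho> = 1 - real (card ?S) * \<delta>"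
  obtain a0 where a0: "a0 \<in> ?S" using S_ne by auto
  have "(\<Sum>c\<in>?S. \<delta>) \<le> sum (Q a0) ?S" using dle[OF a0] by (intro sum_mono) auto
  then have rho0: "0 \<le> \<rho>" unfolding \<rho>_def using Qs[OF a0] by simp
  have "0 < real (card ?S)" using finS S_ne by (simp add: card_gt_0_iff)
  then have rho1: "\<rho> < 1" unfolding \<rho>_def using dpos by simp
  define \<mu> where "\<mu> = (\<lambda>t. pmf (ie_dist E \<xi> t))"
  define d where "d = (\<lambda>t. \<Sum>c\<in>?S. \<bar>\<mu> t c - pi c\<bar>)"
  have dstep: "d (t + K) \<le> \<rho> * d t" for t
  proof -
    have e: "\<mu> (t + K) c - pi c = (\<Sum>a\<in>?S. (\<mu> t a - pi a) * Q a c)" for c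
    proof -
      have 1: "\<mu> (t + K) c = (\<Sum>a\<in>?S. \<mu> t a * Q a c)"
        unfolding \<mu>_def Q_def ie_dist_add by (rule pmf_bind_finite[OF finS dist_support[OF xi]])
      have "pi c = pmf (bind_pmf pip (\<lambda>a. ie_dist E a K)) c" by (simp add: statK pmf_pip)
      also have "\<dots> = (\<Sum>a\<in>?S. pi a * Q a c)"
        unfolding Q_def by (subst pmf_bind_finite[OF finS set_pip]) (simp add: pmf_pip)
      finally show ?thesis unfolding 1 by (simp add: left_diff_distrib sum_subtractf)
    qed
    have s0: "(\<Sum>a\<in>?S. \<mu> t a - pi a) = 0"
      unfolding \<mu>_def sum_subtractf sum_pi sum_pmf_eq_1[OF finS dist_support[OF xi]] by simp
    have "d (t + K) = (\<Sum>c\<in>?S. \<bar>\<Sum>a\<in>?S. (\<mu> t a - pi a) * Q a c\<bar>)"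
      unfolding d_def e ..
    also have "\<dots> \<le> \<rho> * d t" unfolding \<rho>_def d_def
      by (rule contract[OF finS s0 dle Qs])
    finally show ?thesis .
  qed
  have d2: "d t \<le> 2" for t
  proof -
    have "d t \<le> (\<Sum>c\<in>?S. \<mu> t c + pi c)" unfolding d_def
      by (intro sum_mono) (auto simp: \<mu>_def pi_nonneg abs_le_iff pmf_nonneg intro: add_increasing add_increasing2)
    also have "\<dots> = 2" unfolding sum.distrib \<mu>_def sum_pi sum_pmf_eq_1[OF finS dist_support[OF xi]] by simp
    finally show ?thesis .
  qed
  have dn: "d (r + n * K) \<le> \<rho> ^ n * 2" for r n
  proof (induction n)
    case 0 then show ?case using d2 by simp
  next
    case (Suc n)
    have "d (r + Suc n * K) = d ((r + n * K) + K)" by (simp add: algebra_simps)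
    also have "\<dots> \<le> \<rho> * d (r + n * K)" by (rule dstep)
    also have "\<dots> \<le> \<rho> * (\<rho> ^ n * 2)" using Suc rho0 by (intro mult_left_mono)
    finally show ?case by simp
  qed
  have bound: "norm (\<mu> t b - pi b) \<le> 2 * \<rho> ^ (t div K)" for t
  proof -
    have "norm (\<mu> t b - pi b) \<le> d t" unfolding d_def real_norm_def
      by (rule member_le_sum[OF b _ finS]) simp
    also have "d t = d (t mod K + (t div K) * K)" by (simp add: mod_div_mult_eq)
    also have "\<dots> \<le> \<rho> ^ (t div K) * 2" by (rule dn)
    finally show ?thesis by simp
  qed
  have fl: "filterlim (\<lambda>t. t div K) at_top sequentially"
    unfolding filterlim_at_top eventually_sequentially
  proof
    fix z :: nat
    show "\<exists>N. \<forall>n\<ge>N. z \<le> n div K"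
    proof (rule exI[of _ "z * K"], intro allI impI)
      fix n assume "z * K \<le> n"
      then have "z * K div K \<le> n div K" by (rule div_le_mono)
      then show "z \<le> n div K" using Kpos by simp
    qed
  qed
  have "(\<lambda>t. \<rho> ^ (t div K)) \<longlonglongrightarrow> 0"
    by (rule filterlim_compose[OF LIMSEQ_power_zero fl]) (use rho0 rho1 in simp)
  then have lim2: "(\<lambda>t. 2 * \<rho> ^ (t div K)) \<longlonglongrightarrow> 0"
    by (rule tendsto_mult_right_zero)
  have ev: "\<forall>\<^sub>F t in sequentially. norm (\<mu> t b - pi b) \<le> 2 * \<rho> ^ (t div K)"
    using bound by (simp add: always_eventually)
  have "(\<lambda>t. \<mu> t b - pi b) \<longlonglongrightarrow> 0"
    by (rule Lim_null_comparison[OF ev lim2])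
  then show ?thesis unfolding \<mu>_def by (rule LIM_zero_cancel)
qed

lemma final:
  assumes xi: "\<xi> \<in> configs V M" and x: "x \<in> V" and c: "c \<le> M"
  shows "(\<lambda>t. measure_pmf.prob (ie_dist E \<xi> t) {\<eta>. \<eta> x = c})
           \<longlonglongrightarrow> real (c + 1) * real ((M - c + 2 * card V - 3) choose (2 * card V - 3))
                / real ((M + 2 * card V - 1) choose (2 * card V - 1))"
proof -
  let ?A = "{b \<in> configs V M. b x = c}"
  have finA: "finite ?A" using finS by simp
  have p: "measure_pmf.prob (ie_dist E \<xi> t) {\<eta>. \<eta> x = c} = (\<Sum>b\<in>?A. pmf (ie_dist E \<xi> t) b)" for t
  proof -
    have "measure_pmf.prob (ie_dist E \<xi> t) {\<eta>. \<eta> x = c} = measure_pmf.prob (ie_dist E \<xi> t) ?A"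
      by (rule measure_prob_cong_0) (use dist_support[OF xi, of t] in \<open>auto simp: pmf_eq_0_set_pmf\<close>)
    also have "\<dots> = (\<Sum>b\<in>?A. pmf (ie_dist E \<xi> t) b)" by (rule measure_measure_pmf_finite[OF finA])
    finally show ?thesis .
  qed
  have "(\<lambda>t. \<Sum>b\<in>?A. pmf (ie_dist E \<xi> t) b) \<longlonglongrightarrow> (\<Sum>b\<in>?A. pi b)"
    by (rule tendsto_sum) (use conv[OF xi] in auto)
  moreover have "(\<Sum>b\<in>?A. pi b) = real (c + 1) * real ((M - c + 2 * card V - 3) choose (2 * card V - 3))
                / real ((M + 2 * card V - 1) choose (2 * card V - 1))"
  proof -
    have "(\<Sum>b\<in>?A. pi b) = (\<Sum>b\<in>?A. real (wt V b)) / real Z"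
      unfolding pi_def by (simp add: sum_divide_distrib)
    also have "(\<Sum>b\<in>?A. real (wt V b)) = real (\<Sum>b\<in>?A. wt V b)" by simp
    also have "(\<Sum>b\<in>?A. wt V b) = (c + 1) * ((M - c + 2 * card V - 3) choose (2 * card V - 3))"
      by (rule sum_wt_marg[OF finV x two c])
    also have "Z = (M + 2 * card V - 1) choose (2 * card V - 1)"
      unfolding Z_def by (rule sum_wt[OF finV]) (use x in auto)
    finally show ?thesis by (simp only: of_nat_mult)
  qed
  ultimately show ?thesis unfolding p by simp
qed

end

theorem theorem2:
  fixes V :: "'a set" and E :: "('a \<times> 'a) set" and N M c :: nat and \<xi> :: "'a \<Rightarrow> nat" and x :: 'a
  assumes "simple_graph V E" and "connected_graph V E"
    and "card V = N" and "N \<ge> 2"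
    and "\<xi> \<in> configs V M"
    and "x \<in> V" and "c \<le> M"
  shows "(\<lambda>t. measure_pmf.prob (ie_dist E \<xi> t) {\<eta>. \<eta> x = c})
           \<longlonglongrightarrow> real (c + 1) * real ((M - c + 2 * N - 3) choose (2 * N - 3))
                / real ((M + 2 * N - 1) choose (2 * N - 1))"
proof -
  interpret iegM V E M
    by unfold_locales (use assms in auto)
  show ?thesis using final[OF assms(5,6,7)] assms(3) by simp
qed

end
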